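(* For every integer $n\ge 3$, $\mathrm{ex}(n,M_2,S_4)=n(n-3)/2$.
   Context: $M_2$ is the matching with two edges and $S_4$ is the star on $4$ vertices (a center with three leaves). For graphs $H,G$, $\mathcal{N}(H,G)$ is the number of subgraphs of $G$ isomorphic to $H$, and $\mathrm{ex}(n,H,F)$ is the maximum of $\mathcal{N}(H,G)$ over $F$-free graphs $G$ on $n$ vertices. *)

theory Defs
  imports Complex_Main
begin

type_synonym 'a sgraph = "'a set \<times> 'a set set"

definition wf_graph :: "'a sgraph \<Rightarrow> bool" where
  "wf_graph G \<longleftrightarrow> finite (fst G) \<and> (\<forall>e\<in>snd G. e \<subseteq> fst G \<and> card e = 2)"

definition subgraph :: "'a sgraph \<Rightarrow> 'a sgraph \<Rightarrow> bool" where
  "subgraph S G \<longleftrightarrow> wf_graph S \<and> fst S \<subseteq> fst G \<and> snd S \<subseteq> snd G"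

definition graph_iso :: "'a sgraph \<Rightarrow> 'b sgraph \<Rightarrow> bool" where
  "graph_iso G H \<longleftrightarrow> (\<exists>f. bij_betw f (fst G) (fst H) \<and> (\<lambda>e. f ` e) ` snd G = snd H)"

definition num_copies :: "'b sgraph \<Rightarrow> 'a sgraph \<Rightarrow> nat" where
  "num_copies H G = card {S. subgraph S G \<and> graph_iso S H}"

text \<open>ex(n,H,F): maximum of \<N>(H,G) over F-free graphs G on n vertices
  (vertex set {0..<n} without loss of generality).\<close>
definition gen_ex :: "nat \<Rightarrow> 'b sgraph \<Rightarrow> 'c sgraph \<Rightarrow> nat" where
  "gen_ex n H F = Max {num_copies H G | G :: nat sgraph.
      wf_graph G \<and> fst G = {..<n} \<and> num_copies F G = 0}"

definition M2 :: "nat sgraph" where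
  "M2 = ({0,1,2,3}, {{0,1},{2,3}})"

definition S4 :: "nat sgraph" where
  "S4 = ({0,1,2,3}, {{0,1},{0,2},{0,3}})"

end

theory Submission
  imports Defs
begin
lemma card2_fin: "card e = 2 \<Longrightarrow> finite e \<and> e \<noteq> {}"
  using card_gt_0_iff by fastforce


definition deg :: "'a set set \<Rightarrow> 'a \<Rightarrow> nat" where
  "deg E v = card {e\<in>E. v\<in>e}"

definition dpairs :: "'a set set \<Rightarrow> ('a set \<times> 'a set) set" where
  "dpairs E = {(a,b). a\<in>E \<and> b\<in>E \<and> a\<inter>b={}}"

locale sg =
  fixes V :: "'a set" and E :: "'a set set"
  assumes finV: "finite V" and edges: "\<And>e. e\<in>E \<Longrightarrow> e \<subseteq> V \<and> card e = 2"
begin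

lemma finE: "finite E"
proof -
  have "E \<subseteq> Pow V" using edges by auto
  then show ?thesis using finV finite_subset by blast
qed

lemma deg_sum: "(\<Sum>v\<in>V. deg E v) = 2 * card E"
proof -
  have "(\<Sum>v\<in>V. deg E v) = (\<Sum>v\<in>V. \<Sum>e\<in>E. if v\<in>e then 1 else 0)"
    unfolding deg_def using finE by (simp add: sum.inter_filter[symmetric])
  also have "\<dots> = (\<Sum>e\<in>E. \<Sum>v\<in>V. if v\<in>e then 1 else 0)" by (rule sum.swap)
  also have "\<dots> = (\<Sum>e\<in>E. card {v\<in>V. v\<in>e})"
    using finV by (simp add: sum.inter_filter[symmetric])
  also have "\<dots> = (\<Sum>e\<in>E. 2)"
  proof (rule sum.cong)
    fix e assume "e\<in>E"
    then have "{v\<in>V. v\<in>e} = e" using edges by auto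
    then show "card {v\<in>V. v\<in>e} = 2" using edges \<open>e\<in>E\<close> by simp
  qed simp
  finally show ?thesis by simp
qed

lemma deg_sq: "(\<Sum>e\<in>E. \<Sum>x\<in>e. deg E x) = (\<Sum>v\<in>V. deg E v * deg E v)"
proof -
  have "(\<Sum>e\<in>E. \<Sum>x\<in>e. deg E x) = (\<Sum>e\<in>E. \<Sum>v\<in>V. if v\<in>e then deg E v else 0)"
  proof (rule sum.cong)
    fix e assume "e\<in>E"
    then have "{v\<in>V. v\<in>e} = e" using edges by auto
    then show "(\<Sum>x\<in>e. deg E x) = (\<Sum>v\<in>V. if v\<in>e then deg E v else 0)"
    proof -
      have "(\<Sum>v\<in>V. if v\<in>e then deg E v else 0) = (\<Sum>v\<in>{v\<in>V. v\<in>e}. deg E v)"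
        using finV by (simp add: sum.inter_filter)
      then show ?thesis using \<open>{v\<in>V. v\<in>e} = e\<close> by simp
    qed
  qed simp
  also have "\<dots> = (\<Sum>v\<in>V. \<Sum>e\<in>E. if v\<in>e then deg E v else 0)" by (rule sum.swap)
  also have "\<dots> = (\<Sum>v\<in>V. deg E v * deg E v)"
  proof (rule sum.cong)
    fix v assume "v\<in>V"
    have "(\<Sum>e\<in>E. if v\<in>e then deg E v else 0) = (\<Sum>e\<in>{e\<in>E. v\<in>e}. deg E v)"
      using finE sum.inter_filter[of E "\<lambda>_. deg E v" "\<lambda>e. v\<in>e", symmetric] by simp
    also have "\<dots> = deg E v * deg E v" by (simp add: deg_def)
    finally show "(\<Sum>e\<in>E. if v\<in>e then deg E v else 0) = deg E v * deg E v" .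
  qed simp
  finally show ?thesis .
qed

lemma two_sub_eq: "a \<in> E \<Longrightarrow> b \<in> E \<Longrightarrow> u \<in> b \<Longrightarrow> w \<in> b \<Longrightarrow> a = {u,w} \<Longrightarrow> u \<noteq> w \<Longrightarrow> b = a"
proof -
  assume h: "a \<in> E" "b \<in> E" "u \<in> b" "w \<in> b" "a = {u,w}" "u \<noteq> w"
  have "card b = 2" "card a = 2" using edges h by auto
  moreover have "finite b" using \<open>card b = 2\<close> card_gt_0_iff by fastforce
  moreover have "a \<subseteq> b" using h by auto
  ultimately show "b = a" using card_subset_eq[of b a] by simp
qed

lemma edge_local: "a \<in> E \<Longrightarrow> card {b\<in>E. a\<inter>b={}} + (\<Sum>x\<in>a. deg E x) = card E + 1"
proof -
  assume aE: "a \<in> E"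
  then obtain u w where a: "a = {u,w}" "u \<noteq> w" using edges card_2_iff by metis
  let ?Au = "{e\<in>E. u\<in>e}" and ?Aw = "{e\<in>E. w\<in>e}"
  have meet: "{b\<in>E. a\<inter>b\<noteq>{}} = ?Au \<union> ?Aw" using a by auto
  have int: "?Au \<inter> ?Aw = {a}"
  proof
    show "?Au \<inter> ?Aw \<subseteq> {a}"
    proof
      fix b assume "b \<in> ?Au \<inter> ?Aw"
      then have "b \<in> E" "u \<in> b" "w \<in> b" by auto
      then have "b = a" using two_sub_eq[OF aE _ _ _ a] by blast
      then show "b \<in> {a}" by simp
    qed
    show "{a} \<subseteq> ?Au \<inter> ?Aw" using aE a by auto
  qed
  have "card ?Au + card ?Aw = card (?Au \<union> ?Aw) + card (?Au \<inter> ?Aw)"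
    by (rule card_Un_Int) (use finE in auto)
  then have c1: "deg E u + deg E w = card {b\<in>E. a\<inter>b\<noteq>{}} + 1"
    using meet int by (simp add: deg_def)
  have "card {b\<in>E. a\<inter>b={}} + card {b\<in>E. a\<inter>b\<noteq>{}} = card E"
  proof -
    have "card ({b\<in>E. a\<inter>b={}} \<union> {b\<in>E. a\<inter>b\<noteq>{}}) = card {b\<in>E. a\<inter>b={}} + card {b\<in>E. a\<inter>b\<noteq>{}}"
      by (rule card_Un_disjoint) (use finE in auto)
    moreover have "{b\<in>E. a\<inter>b={}} \<union> {b\<in>E. a\<inter>b\<noteq>{}} = E" by auto
    ultimately show ?thesis by simp
  qed
  moreover have "(\<Sum>x\<in>a. deg E x) = deg E u + deg E w" using a by simp
  ultimately show ?thesis using c1 by simp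
qed

lemma dpairs_count: "card (dpairs E) + (\<Sum>v\<in>V. deg E v * deg E v) = card E * card E + card E"
proof -
  have "dpairs E = (SIGMA a:E. {b\<in>E. a\<inter>b={}})" unfolding dpairs_def by auto
  then have "card (dpairs E) = (\<Sum>a\<in>E. card {b\<in>E. a\<inter>b={}})" using finE by simp
  then have "card (dpairs E) + (\<Sum>v\<in>V. deg E v * deg E v) = (\<Sum>a\<in>E. card {b\<in>E. a\<inter>b={}} + (\<Sum>x\<in>a. deg E x))"
    by (simp add: deg_sq[symmetric] sum.distrib)
  also have "\<dots> = (\<Sum>a\<in>E. card E + 1)" using edge_local by (rule sum.cong[OF refl])
  finally show ?thesis by simp
qed

end


definition opairs :: "'a::linorder set set \<Rightarrow> ('a set \<times> 'a set) set" where
  "opairs E = {(a,b). a\<in>E \<and> b\<in>E \<and> a\<inter>b={} \<and> Min a < Min b}"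


lemma opairs_double:
  assumes fin: "finite E" and c2: "\<And>e. e\<in>E \<Longrightarrow> card e = 2"
  shows "card (dpairs E) = 2 * card (opairs E)"
proof -
  let ?O2 = "{(a,b). a\<in>E \<and> b\<in>E \<and> a\<inter>b={} \<and> Min b < Min a}"
  have fd: "finite (dpairs E)"
    by (rule finite_subset[of _ "E \<times> E"]) (auto simp: dpairs_def fin)
  have split: "dpairs E = opairs E \<union> ?O2"
  proof -
    have "Min a \<noteq> Min b" if "a\<in>E" "b\<in>E" "a\<inter>b={}" for a b
    proof -
      have "Min a \<in> a" "Min b \<in> b" using c2 card2_fin that by (auto intro: Min_in)
      then show ?thesis using that by auto
    qed
    then show ?thesis unfolding dpairs_def opairs_def by fastforce
  qed
  have disj: "opairs E \<inter> ?O2 = {}" unfolding opairs_def by auto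
  have sw: "?O2 = prod.swap ` opairs E" unfolding opairs_def by force
  have "card ?O2 = card (opairs E)" unfolding sw by (rule card_image) simp
  moreover have "card (dpairs E) = card (opairs E) + card ?O2"
    unfolding split by (rule card_Un_disjoint) (use fd split disj in auto)
  ultimately show ?thesis by simp
qed

lemma M2_copies:
  assumes wf: "wf_graph (V, E)"
  shows "{S. subgraph S (V,E) \<and> graph_iso S M2} = (\<lambda>(a,b). (a\<union>b, {a,b})) ` opairs E"
proof
  have eV: "\<And>e. e \<in> E \<Longrightarrow> e \<subseteq> V \<and> card e = 2" using wf unfolding wf_graph_def by auto
  show "(\<lambda>(a,b). (a\<union>b, {a,b})) ` opairs E \<subseteq> {S. subgraph S (V,E) \<and> graph_iso S M2}"
  proof
    fix S assume "S \<in> (\<lambda>(a,b). (a\<union>b, {a,b})) ` opairs E"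
    then obtain a b where S: "S = (a\<union>b, {a,b})" and ab: "a\<in>E" "b\<in>E" "a\<inter>b={}"
      unfolding opairs_def by auto
    obtain a1 a2 where a: "a = {a1,a2}" "a1\<noteq>a2" using eV[OF ab(1)] card_2_iff by metis
    obtain b1 b2 where b: "b = {b1,b2}" "b1\<noteq>b2" using eV[OF ab(2)] card_2_iff by metis
    have d: "a1 \<noteq> b1" "a1 \<noteq> b2" "a2 \<noteq> b1" "a2 \<noteq> b2" using ab(3) a b by auto
    have sub: "subgraph S (V,E)"
      unfolding subgraph_def wf_graph_def S using eV ab card2_fin by auto
    define f where "f x = (if x = a1 then 0 else if x = a2 then 1 else if x = b1 then 2 else (3::nat))" for x
    have fv: "f a1 = 0" "f a2 = 1" "f b1 = 2" "f b2 = 3" unfolding f_def using a(2) b(2) d by auto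
    have "bij_betw f (a\<union>b) {0,1,2,3}"
      unfolding bij_betw_def inj_on_def a b using fv by auto
    moreover have "(\<lambda>e. f ` e) ` {a,b} = {{0,1},{2,3}}" unfolding a b using fv by auto
    ultimately have "graph_iso S M2" unfolding graph_iso_def M2_def S fst_conv snd_conv by blast
    with sub show "S \<in> {S. subgraph S (V,E) \<and> graph_iso S M2}" by simp
  qed
  show "{S. subgraph S (V,E) \<and> graph_iso S M2} \<subseteq> (\<lambda>(a,b). (a\<union>b, {a,b})) ` opairs E"
  proof
    fix S assume "S \<in> {S. subgraph S (V,E) \<and> graph_iso S M2}"
    then have sub: "subgraph S (V,E)" and iso: "graph_iso S M2" by auto
    obtain W F where S: "S = (W,F)" by (cases S)
    have wfS: "wf_graph (W,F)" and FE: "F \<subseteq> E" and WV: "W \<subseteq> V"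
      using sub unfolding subgraph_def S by auto
    have FW: "\<And>e. e\<in>F \<Longrightarrow> e \<subseteq> W" using wfS unfolding wf_graph_def by auto
    obtain f :: "'a \<Rightarrow> nat" where bij: "bij_betw f W {0,1,2,3}" and im: "(\<lambda>e. f ` e) ` F = {{0,1},{2,3}}"
      using iso unfolding graph_iso_def M2_def S by auto
    have inj: "inj_on f W" and fW: "f ` W = {0,1,2,3}" using bij unfolding bij_betw_def by auto
    have "{0,1} \<in> (\<lambda>e. f ` e) ` F" using im by simp
    then obtain a where aF: "a \<in> F" and fa: "f ` a = {0,1}" by auto
    have "{2,3} \<in> (\<lambda>e. f ` e) ` F" using im by simp
    then obtain b where bF: "b \<in> F" and fb: "f ` b = {2,3}" by auto
    have Fab: "F = {a,b}"
    proof
      show "{a,b} \<subseteq> F" using aF bF by auto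
      show "F \<subseteq> {a,b}"
      proof
        fix e assume eF: "e \<in> F"
        then have "f ` e \<in> (\<lambda>e. f ` e) ` F" by (rule imageI)
        then have "f ` e \<in> {{0,1},{2,3}}" using im by simp
        then have "f ` e = f ` a \<or> f ` e = f ` b" unfolding fa fb by simp
        moreover have "f ` e = f ` a \<longleftrightarrow> e = a" using inj_on_image_eq_iff[OF inj FW[OF eF] FW[OF aF]] .
        moreover have "f ` e = f ` b \<longleftrightarrow> e = b" using inj_on_image_eq_iff[OF inj FW[OF eF] FW[OF bF]] .
        ultimately show "e \<in> {a,b}" by auto
      qed
    qed
    have "f ` (a \<union> b) = f ` W" unfolding image_Un fa fb fW by auto
    moreover have "a \<union> b \<subseteq> W" using FW aF bF by auto
    ultimately have Wab: "W = a \<union> b" using inj_on_image_eq_iff[OF inj, of "a \<union> b" W] by auto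
    have "f ` (a \<inter> b) = {}"
    proof -
      have "f ` (a \<inter> b) \<subseteq> f ` a \<inter> f ` b" by auto
      also have "\<dots> = {}" unfolding fa fb by auto
      finally show ?thesis by simp
    qed
    then have disj: "a \<inter> b = {}" by simp
    have aE: "a \<in> E" and bE: "b \<in> E" using FE aF bF by auto
    have "Min a \<in> a" "Min b \<in> b" using aE bE wf card2_fin unfolding wf_graph_def by (auto intro!: Min_in)
    then have "Min a \<noteq> Min b" using disj by auto
    then have "Min a < Min b \<or> Min b < Min a" by auto
    then show "S \<in> (\<lambda>(a,b). (a\<union>b, {a,b})) ` opairs E"
    proof
      assume "Min a < Min b"
      then have "(a,b) \<in> opairs E" using aE bE disj unfolding opairs_def by auto
      moreover have "S = (\<lambda>(a,b). (a\<union>b, {a,b})) (a,b)" using S Wab Fab by simp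
      ultimately show ?thesis by blast
    next
      assume "Min b < Min a"
      then have "(b,a) \<in> opairs E" using aE bE disj unfolding opairs_def by auto
      moreover have "S = (\<lambda>(a,b). (a\<union>b, {a,b})) (b,a)" using S Wab Fab by auto
      ultimately show ?thesis by blast
    qed
  qed
qed

lemma M2_num:
  assumes wf: "wf_graph (V, E)"
  shows "num_copies M2 (V,E) = card (opairs E)"
proof -
  have "inj_on (\<lambda>(a,b). (a\<union>b, {a,b})) (opairs E)"
  proof (rule inj_onI)
    fix x y assume h: "x \<in> opairs E" "y \<in> opairs E" "(\<lambda>(a,b). (a\<union>b, {a,b})) x = (\<lambda>(a,b). (a\<union>b, {a,b})) y"
    obtain a b where x: "x = (a,b)" by (cases x)
    obtain c d where y: "y = (c,d)" by (cases y)
    have "{a,b} = {c,d}" using h(3) x y by simp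
    then have "(a = c \<and> b = d) \<or> (a = d \<and> b = c)" by (metis doubleton_eq_iff)
    then show "x = y" using h(1,2) x y unfolding opairs_def by auto
  qed
  then show ?thesis unfolding num_copies_def M2_copies[OF wf] by (rule card_image)
qed



lemma wf_finE: "wf_graph (V,E) \<Longrightarrow> finite E"
proof -
  assume "wf_graph (V,E)"
  then have "E \<subseteq> Pow V" "finite V" unfolding wf_graph_def by auto
  then show ?thesis using finite_subset by blast
qed

lemma copies_finite: "wf_graph (V,E) \<Longrightarrow> finite {S. subgraph S (V,E) \<and> P S}"
proof -
  assume wf: "wf_graph (V,E)"
  have "{S. subgraph S (V,E) \<and> P S} \<subseteq> Pow V \<times> Pow E" unfolding subgraph_def by auto
  moreover have "finite (Pow V \<times> Pow E)" using wf wf_finE[OF wf] unfolding wf_graph_def by auto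
  ultimately show ?thesis using finite_subset by blast
qed

lemma other_end: "card e = 2 \<Longrightarrow> v \<in> e \<Longrightarrow> \<exists>a. a \<noteq> v \<and> e = {v,a}"
proof -
  assume "card e = 2" "v \<in> e"
  then obtain x y where "e = {x,y}" "x \<noteq> y" using card_2_iff by metis
  then show ?thesis using \<open>v \<in> e\<close> by auto
qed

lemma S4_copy_deg:
  fixes V :: "'a set"
  assumes wf: "wf_graph (V,E)" and sub: "subgraph S (V,E)" and iso: "graph_iso S S4"
  shows "\<exists>v. deg E v \<ge> 3"
proof -
  obtain W F where S: "S = (W,F)" by (cases S)
  have wfS: "wf_graph (W,F)" and FE: "F \<subseteq> E"
    using sub unfolding subgraph_def S by auto
  have FW: "\<And>e. e\<in>F \<Longrightarrow> e \<subseteq> W" using wfS unfolding wf_graph_def by auto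
  obtain f :: "'a \<Rightarrow> nat" where bij: "bij_betw f W {0,1,2,3}" and im: "(\<lambda>e. f ` e) ` F = {{0,1},{0,2},{0,3}}"
    using iso unfolding graph_iso_def S4_def S by auto
  have inj: "inj_on f W" and fW: "f ` W = {0,1,2,3}" using bij unfolding bij_betw_def by auto
  have "0 \<in> f ` W" using fW by simp
  then obtain v where vW: "v \<in> W" and fv: "f v = 0" by auto
  have "{0,1} \<in> (\<lambda>e. f ` e) ` F" using im by simp
  then obtain e1 where e1: "e1 \<in> F" "f ` e1 = {0,1}" by auto
  have "{0,2} \<in> (\<lambda>e. f ` e) ` F" using im by simp
  then obtain e2 where e2: "e2 \<in> F" "f ` e2 = {0,2}" by auto
  have "{0,3} \<in> (\<lambda>e. f ` e) ` F" using im by simp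
  then obtain e3 where e3: "e3 \<in> F" "f ` e3 = {0,3}" by auto
  have vin: "v \<in> e" if "e \<in> F" "0 \<in> f ` e" for e
  proof -
    from that(2) obtain x where "x \<in> e" "f x = 0" by (metis imageE)
    moreover have "x \<in> W" using FW that \<open>x \<in> e\<close> by auto
    ultimately have "x = v" using inj vW fv unfolding inj_on_def by auto
    then show ?thesis using \<open>x \<in> e\<close> by simp
  qed
  have v1: "v \<in> e1" using vin e1 by simp
  have v2: "v \<in> e2" using vin e2 by simp
  have v3: "v \<in> e3" using vin e3 by simp
  have d: "e1 \<noteq> e2" "e1 \<noteq> e3" "e2 \<noteq> e3"
  proof -
    have "{0,1} \<noteq> ({0,2}::nat set)" "{0,1} \<noteq> ({0,3}::nat set)" "{0,2} \<noteq> ({0,3}::nat set)"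
      by (simp_all add: doubleton_eq_iff)
    then show "e1 \<noteq> e2" "e1 \<noteq> e3" "e2 \<noteq> e3" using e1(2) e2(2) e3(2) by metis+
  qed
  have "{e1,e2,e3} \<subseteq> {e\<in>E. v\<in>e}" using FE e1 e2 e3 v1 v2 v3 by auto
  moreover have "finite {e\<in>E. v\<in>e}" using wf_finE[OF wf] by simp
  ultimately have "card {e1,e2,e3} \<le> deg E v" unfolding deg_def by (rule card_mono[rotated])
  moreover have "card {e1,e2,e3} = 3" using d by simp
  ultimately show ?thesis by auto
qed

lemma deg_S4_copy:
  fixes V :: "'a set"
  assumes wf: "wf_graph (V,E)" and dv: "deg E v \<ge> 3"
  shows "\<exists>S. subgraph S (V,E) \<and> graph_iso S S4"
proof -
  have eV: "\<And>e. e \<in> E \<Longrightarrow> e \<subseteq> V \<and> card e = 2" using wf unfolding wf_graph_def by auto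
  obtain T where T: "T \<subseteq> {e\<in>E. v\<in>e}" "card T = 3"
    using dv unfolding deg_def by (rule obtain_subset_with_card_n)
  from T(2) obtain e1 e2 e3 where Te: "T = {e1,e2,e3}" and d: "e1 \<noteq> e2" "e2 \<noteq> e3" "e1 \<noteq> e3"
    unfolding card_3_iff by blast
  have ein: "e1 \<in> E" "v \<in> e1" "e2 \<in> E" "v \<in> e2" "e3 \<in> E" "v \<in> e3" using T Te by auto
  obtain a1 where a1: "a1 \<noteq> v" "e1 = {v,a1}" using other_end[of e1 v] eV ein by blast
  obtain a2 where a2: "a2 \<noteq> v" "e2 = {v,a2}" using other_end[of e2 v] eV ein by blast
  obtain a3 where a3: "a3 \<noteq> v" "e3 = {v,a3}" using other_end[of e3 v] eV ein by blast
  have da: "a1 \<noteq> a2" "a2 \<noteq> a3" "a1 \<noteq> a3" using d a1 a2 a3 by auto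
  define f where "f x = (if x = v then 0 else if x = a1 then 1 else if x = a2 then 2 else (3::nat))" for x
  have fv: "f v = 0" "f a1 = 1" "f a2 = 2" "f a3 = 3" unfolding f_def using a1 a2 a3 da by auto
  let ?S = "({v,a1,a2,a3}, {e1,e2,e3})"
  have sub: "subgraph ?S (V,E)"
    unfolding subgraph_def wf_graph_def using eV ein a1 a2 a3 by auto
  have "bij_betw f {v,a1,a2,a3} {0,1,2,3}"
    unfolding bij_betw_def inj_on_def using fv by auto
  moreover have "(\<lambda>e. f ` e) ` {e1,e2,e3} = {{0,1},{0,2},{0,3}}" unfolding a1 a2 a3 using fv by auto
  ultimately have "graph_iso ?S S4" unfolding graph_iso_def S4_def fst_conv snd_conv by blast
  with sub show ?thesis by blast
qed

lemma S4_free: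
  fixes V :: "'a set"
  assumes wf: "wf_graph (V,E)"
  shows "num_copies S4 (V,E) = 0 \<longleftrightarrow> (\<forall>v. deg E v \<le> 2)"
proof
  assume h: "num_copies S4 (V,E) = 0"
  show "\<forall>v. deg E v \<le> 2"
  proof (rule ccontr)
    assume "\<not> (\<forall>v. deg E v \<le> 2)"
    then obtain v where "\<not> deg E v \<le> 2" by blast
    then have "deg E v \<ge> 3" by simp
    then obtain S where "subgraph S (V,E) \<and> graph_iso S S4" using deg_S4_copy[OF wf] by blast
    then have ne: "{S. subgraph S (V,E) \<and> graph_iso S S4} \<noteq> {}" by blast
    have fi: "finite {S. subgraph S (V,E) \<and> graph_iso S S4}" by (rule copies_finite[OF wf])
    have "card {S. subgraph S (V,E) \<and> graph_iso S S4} \<noteq> 0" using card_0_eq[OF fi] ne by simp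
    then show False using h unfolding num_copies_def by simp
  qed
next
  assume h: "\<forall>v. deg E v \<le> 2"
  have "\<not> (subgraph S (V,E) \<and> graph_iso S S4)" for S
  proof
    assume "subgraph S (V,E) \<and> graph_iso S S4"
    then obtain v where "deg E v \<ge> 3" using S4_copy_deg[OF wf] by blast
    moreover have "deg E v \<le> 2" using h by blast
    ultimately show False by simp
  qed
  then have "{S. subgraph S (V,E) \<and> graph_iso S S4} = {}" by blast
  then show "num_copies S4 (V,E) = 0" unfolding num_copies_def by (simp only: card.empty)
qed



definition cycE :: "nat \<Rightarrow> nat set set" where
  "cycE n = (\<lambda>i. {i, Suc i mod n}) ` {..<n}"

lemma suc_mod: "i < n \<Longrightarrow> Suc i mod n = (if Suc i < n then Suc i else 0)"
proof (cases "Suc i < n")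
  case False
  assume "i < n"
  then have "Suc i = n" using False by simp
  then show ?thesis by simp
qed simp

lemma dvd_suc: "x < n \<Longrightarrow> (n dvd Suc x) = (Suc x = n)"
  by (metis dvd_imp_le dvd_refl le_antisym Suc_leI zero_less_Suc)

lemma cyc_wf: assumes "n \<ge> 3" shows "wf_graph ({..<n}, cycE n)"
  unfolding wf_graph_def cycE_def using assms by (auto simp: suc_mod)

lemma cyc_inj: assumes "n \<ge> 3" shows "inj_on (\<lambda>i. {i, Suc i mod n}) {..<n}"
proof (rule inj_onI)
  fix i j assume i: "i \<in> {..<n}" and j: "j \<in> {..<n}" and eq: "{i, Suc i mod n} = {j, Suc j mod n}"
  have "(i = j \<and> Suc i mod n = Suc j mod n) \<or> (i = Suc j mod n \<and> Suc i mod n = j)"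
    using eq by (simp add: doubleton_eq_iff)
  then show "i = j"
  proof
    assume "i = j \<and> Suc i mod n = Suc j mod n" then show ?thesis by simp
  next
    assume h: "i = Suc j mod n \<and> Suc i mod n = j"
    then show ?thesis using i j assms by (auto simp: suc_mod split: if_splits)
  qed
qed

lemma cyc_card: assumes "n \<ge> 3" shows "card (cycE n) = n"
  unfolding cycE_def using card_image[OF cyc_inj[OF assms]] by simp

lemma cyc_deg: assumes n: "n \<ge> 3" and v: "v < n" shows "deg (cycE n) v = 2"
proof -
  define p where "p = (if v = 0 then n - 1 else v - 1)"
  have "{e\<in>cycE n. v\<in>e} = (\<lambda>i. {i, Suc i mod n}) ` {i\<in>{..<n}. v \<in> {i, Suc i mod n}}"
    unfolding cycE_def by auto
  also have "{i\<in>{..<n}. v \<in> {i, Suc i mod n}} = {v, p}"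
  proof
    show "{v, p} \<subseteq> {i\<in>{..<n}. v \<in> {i, Suc i mod n}}"
    proof -
      have "p < n" unfolding p_def using n v by auto
      moreover have "Suc p mod n = v"
      proof (cases "v = 0")
        case True
        then have "Suc p = n" unfolding p_def using n by simp
        then show ?thesis using True by simp
      next
        case False
        then have "Suc p = v" unfolding p_def by simp
        then show ?thesis using v by simp
      qed
      ultimately show ?thesis using v by auto
    qed
    show "{i\<in>{..<n}. v \<in> {i, Suc i mod n}} \<subseteq> {v, p}"
    proof
      fix i assume "i \<in> {i\<in>{..<n}. v \<in> {i, Suc i mod n}}"
      then have i: "i < n" and "v = i \<or> v = Suc i mod n" by auto
      then consider "v = i" | "v = Suc i mod n" by blast
      then show "i \<in> {v,p}"
      proof cases
        case 2
        show ?thesis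
        proof (cases "Suc i < n")
          case True
          then have "v = Suc i" using 2 suc_mod[OF i] by simp
          then show ?thesis unfolding p_def by simp
        next
          case False
          then have v0: "v = 0" and "Suc i = n" using 2 suc_mod[OF i] i by auto
          then have "i = n - 1" by simp
          then have "i = p" unfolding p_def using v0 by simp
          then show ?thesis by simp
        qed
      qed simp
    qed
  qed
  finally have eq: "{e\<in>cycE n. v\<in>e} = (\<lambda>i. {i, Suc i mod n}) ` {v,p}" .
  have "deg (cycE n) v = card ((\<lambda>i. {i, Suc i mod n}) ` {v,p})" unfolding deg_def eq by (rule refl)
  also have "\<dots> = card {v,p}"
  proof (rule card_image)
    have "{v,p} \<subseteq> {..<n}" unfolding p_def using n v by auto
    then show "inj_on (\<lambda>i. {i, Suc i mod n}) {v,p}" by (rule inj_on_subset[OF cyc_inj[OF n]])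
  qed
  also have "\<dots> = 2"
  proof -
    have "p \<noteq> v" unfolding p_def using n v by auto
    then show ?thesis by simp
  qed
  finally show ?thesis .
qed



lemma key_ineq:
  fixes D Q m n :: int
  assumes "D + Q = m*m + m" "Q \<ge> 2*m" "Q + 2*n \<ge> 6*m" "m \<le> n" "n \<ge> 3" "m \<ge> 0"
  shows "D \<le> n*(n-3)"
proof (cases "m + n \<ge> 5")
  case True
  have "(n-m)*(n+m-5) \<ge> 0" using True assms by (intro mult_nonneg_nonneg) auto
  then show ?thesis using assms by (simp add: algebra_simps)
next
  case False
  then have "m \<le> 1" using assms by simp
  then have "m = 0 \<or> m = 1" using assms by auto
  then have "D \<le> 0" using assms by auto
  moreover have "n*(n-3) \<ge> 0" using assms by simp
  ultimately show ?thesis by linarith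
qed

lemma wf_sg: "wf_graph (V,E) \<Longrightarrow> sg V E"
  unfolding sg_def wf_graph_def by auto

lemma deg_out: "wf_graph (V,E) \<Longrightarrow> v \<notin> V \<Longrightarrow> deg E v = 0"
proof -
  assume wf: "wf_graph (V,E)" and v: "v \<notin> V"
  have "{e\<in>E. v\<in>e} = {}" using wf v unfolding wf_graph_def by auto
  then show ?thesis unfolding deg_def by (simp only: card.empty)
qed

lemma upper:
  assumes wf: "wf_graph (V,E)" and dg: "\<forall>v. deg E v \<le> 2" and n: "card V \<ge> 3"
  shows "card (dpairs E) \<le> card V * (card V - 3)"
proof -
  interpret sg V E using wf_sg[OF wf] .
  let ?Q = "\<Sum>v\<in>V. deg E v * deg E v"
  let ?m = "card E" and ?n = "card V"
  have s1: "card (dpairs E) + ?Q = ?m * ?m + ?m" by (rule dpairs_count)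
  have s2: "(\<Sum>v\<in>V. deg E v) = 2 * ?m" by (rule deg_sum)
  have "(\<Sum>v\<in>V. deg E v) \<le> (\<Sum>v\<in>V. 2)" using dg by (intro sum_mono) auto
  then have mn: "?m \<le> ?n" using s2 by simp
  have "(\<Sum>v\<in>V. deg E v) \<le> ?Q" by (intro sum_mono) simp
  then have q1: "2 * ?m \<le> ?Q" using s2 by simp
  have "(\<Sum>v\<in>V. 3 * deg E v) \<le> (\<Sum>v\<in>V. deg E v * deg E v + 2)"
  proof (intro sum_mono)
    fix v assume "v \<in> V"
    have "deg E v = 0 \<or> deg E v = 1 \<or> deg E v = 2" using dg by (metis le_SucE le_zero_eq numeral_2_eq_2 One_nat_def)
    then show "3 * deg E v \<le> deg E v * deg E v + 2" by auto
  qed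
  moreover have "(\<Sum>v\<in>V. deg E v * deg E v + 2) = ?Q + 2 * ?n"
    by (subst sum.distrib) simp
  moreover have "(\<Sum>v\<in>V. 3 * deg E v) = 3 * (\<Sum>v\<in>V. deg E v)"
    by (rule sum_distrib_left[symmetric])
  ultimately have q2: "6 * ?m \<le> ?Q + 2 * ?n" using s2 by linarith
  have "int (card (dpairs E)) \<le> int ?n * (int ?n - 3)"
  proof (rule key_ineq[of _ "int ?Q" "int ?m"])
    show "int (card (dpairs E)) + int ?Q = int ?m * int ?m + int ?m"
      using s1 by (metis of_nat_add of_nat_mult)
  qed (use q1 q2 mn n in linarith)+
  moreover have eq: "int (card V * (card V - 3)) = int (card V) * (int (card V) - 3)"
    using n by (simp add: of_nat_diff)
  ultimately have "int (card (dpairs E)) \<le> int (card V * (card V - 3))" by (simp only: eq)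
  then show ?thesis by (simp only: of_nat_le_iff)
qed

lemma cycle_count:
  assumes n: "n \<ge> 3"
  shows "2 * num_copies M2 ({..<n}, cycE n) = n * (n - 3)"
proof -
  have wf: "wf_graph ({..<n}, cycE n)" by (rule cyc_wf[OF n])
  interpret sg "{..<n}" "cycE n" using wf_sg[OF wf] .
  have "card (dpairs (cycE n)) + (\<Sum>v\<in>{..<n}. deg (cycE n) v * deg (cycE n) v) = n * n + n"
    using dpairs_count cyc_card[OF n] by simp
  moreover have "(\<Sum>v\<in>{..<n}. deg (cycE n) v * deg (cycE n) v) = (\<Sum>v\<in>{..<n}. 4)"
    using cyc_deg[OF n] by (intro sum.cong) auto
  ultimately have "card (dpairs (cycE n)) = n * n - 3 * n" by simp
  moreover have "card (dpairs (cycE n)) = 2 * card (opairs (cycE n))"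
    by (rule opairs_double[OF finE]) (use edges in auto)
  ultimately show ?thesis using M2_num[OF wf] by (simp add: diff_mult_distrib2)
qed

theorem mainTheorem19:
  fixes n :: nat
  assumes "n \<ge> 3"
  shows "real (gen_ex n M2 S4) = real n * (real n - 3) / 2"
proof -
  let ?A = "{num_copies M2 G | G :: nat sgraph. wf_graph G \<and> fst G = {..<n} \<and> num_copies S4 G = 0}"
  let ?c = "num_copies M2 ({..<n}, cycE n)"
  have wfc: "wf_graph ({..<n}, cycE n)" by (rule cyc_wf[OF assms])
  have "\<forall>v. deg (cycE n) v \<le> 2"
  proof
    fix v show "deg (cycE n) v \<le> 2"
      using cyc_deg[OF assms, of v] deg_out[OF wfc, of v] by (cases "v < n") auto
  qed
  then have "num_copies S4 ({..<n}, cycE n) = 0" using S4_free[OF wfc] by simp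
  then have cA: "?c \<in> ?A" using wfc by auto
  have ub: "x \<le> ?c" if xA: "x \<in> ?A" for x
  proof -
    obtain G :: "nat sgraph" where G: "x = num_copies M2 G" "wf_graph G" "fst G = {..<n}" "num_copies S4 G = 0"
      using xA by blast
    obtain V E where GVE: "G = (V,E)" by (cases G)
    have wf: "wf_graph (V,E)" and V: "V = {..<n}" using G GVE by auto
    have dg: "\<forall>v. deg E v \<le> 2" using S4_free[OF wf] G GVE by simp
    have "card (dpairs E) \<le> n * (n - 3)" using upper[OF wf dg] V assms by simp
    moreover have "card (dpairs E) = 2 * card (opairs E)"
      by (rule opairs_double[OF wf_finE[OF wf]]) (use wf in \<open>auto simp: wf_graph_def\<close>)
    moreover have "x = card (opairs E)" using G GVE M2_num[OF wf] by simp
    ultimately have "2 * x \<le> 2 * ?c" using cycle_count[OF assms] by simp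
    then show ?thesis by simp
  qed
  have "finite ?A" by (rule finite_subset[of _ "{..?c}"]) (use ub in auto)
  then have "gen_ex n M2 S4 = ?c" unfolding gen_ex_def using cA ub by (intro Max_eqI) auto
  moreover have "real (2 * ?c) = real (n * (n - 3))" using cycle_count[OF assms] by simp
  ultimately show ?thesis using assms by (simp add: of_nat_diff)
qed

end
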